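(* Let $n=n_{obs}+n_{mis}$ with $n_{obs}\ge2$, $n_{mis}\ge1$. Let $Y_1,\dots,Y_{n_{obs}}$ be i.i.d. $N(\mu,\sigma^2)$, with $\bar Y_{obs}$ their mean and $CSS=\sum_{i=1}^{n_{obs}}(Y_i-\bar Y_{obs})^2$. Fix a real $\nu_{prior}$ with $n_{obs}+\nu_{prior}>3$ and set $\nu_{PD}=\nu_{prior}+n_{obs}-1$. For each $d=1,\dots,D$ ($D\ge1$), independently, draw $U_{PD,d}\sim\chi^2_{\nu_{PD}}$ and $Z_{PD,d}\sim N(0,1/n_{obs})$, set $\hat\sigma^2_{d}=CSS/U_{PD,d}$, $\hat\mu_d=\bar Y_{obs}+\hat\sigma_d Z_{PD,d}$, draw $Y_{imp,i,d}=\hat\mu_d+\hat\sigma_d Z_{imp,i,d}$ for $i=n_{obs}+1,\dots,n$ with $Z_{imp,i,d}$ i.i.d. $N(0,1)$ (all random variables independent of each other and of the data), and let $\hat\mu_{SI,d}$ be the sample mean of the $n$ values $Y_1,\dots,Y_{n_{obs}},Y_{imp,n_{obs}+1,d},\dots,Y_{imp,n,d}$. Let $\hat\mu_{MI,PD}=\frac1D\sum_{d=1}^D\hat\mu_{SI,d}$. Then $E(\hat\mu_{MI,PD})=\mu$ and $$\operatorname{Var}(\hat\mu_{MI,PD})=\frac{\sigma^2}{n_{obs}}\left(1+\frac{n_{mis}(n_{obs}-1)}{Dn(n_{obs}+\nu_{prior}-3)}\right).$$ *)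

theory Defs
  imports "HOL-Probability.Probability"
begin

definition chi2_density :: "real \<Rightarrow> real \<Rightarrow> real" where
  "chi2_density k x =
     (if x > 0 then x powr (k / 2 - 1) * exp (- x / 2) / (2 powr (k / 2) * Gamma (k / 2)) else 0)"

datatype rv_idx = IdxY nat | IdxU nat | IdxZPD nat | IdxZimp nat nat

definition all_rvs ::
  "(nat \<Rightarrow> 'a \<Rightarrow> real) \<Rightarrow> (nat \<Rightarrow> 'a \<Rightarrow> real) \<Rightarrow> (nat \<Rightarrow> 'a \<Rightarrow> real) \<Rightarrow>
   (nat \<Rightarrow> nat \<Rightarrow> 'a \<Rightarrow> real) \<Rightarrow> rv_idx \<Rightarrow> 'a \<Rightarrow> real" where
  "all_rvs Y U ZPD Zimp j = (case j of IdxY i \<Rightarrow> Y i | IdxU d \<Rightarrow> U d | IdxZPD d \<Rightarrow> ZPD d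
                                  | IdxZimp i d \<Rightarrow> Zimp i d)"

definition rv_index_set :: "nat \<Rightarrow> nat \<Rightarrow> nat \<Rightarrow> rv_idx set" where
  "rv_index_set n_obs n_mis D =
     IdxY ` {..<n_obs} \<union> IdxU ` {..<D} \<union> IdxZPD ` {..<D}
     \<union> {IdxZimp i d | i d. i < n_mis \<and> d < D}"

definition ybar_obs :: "nat \<Rightarrow> (nat \<Rightarrow> 'a \<Rightarrow> real) \<Rightarrow> 'a \<Rightarrow> real" where
  "ybar_obs n_obs Y \<omega> = (\<Sum>i<n_obs. Y i \<omega>) / real n_obs"

definition CSS :: "nat \<Rightarrow> (nat \<Rightarrow> 'a \<Rightarrow> real) \<Rightarrow> 'a \<Rightarrow> real" where
  "CSS n_obs Y \<omega> = (\<Sum>i<n_obs. (Y i \<omega> - ybar_obs n_obs Y \<omega>)\<^sup>2)"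

definition sigma_hat :: "nat \<Rightarrow> (nat \<Rightarrow> 'a \<Rightarrow> real) \<Rightarrow> (nat \<Rightarrow> 'a \<Rightarrow> real) \<Rightarrow> nat \<Rightarrow> 'a \<Rightarrow> real" where
  "sigma_hat n_obs Y U d \<omega> = sqrt (CSS n_obs Y \<omega> / U d \<omega>)"

definition mu_hat ::
  "nat \<Rightarrow> (nat \<Rightarrow> 'a \<Rightarrow> real) \<Rightarrow> (nat \<Rightarrow> 'a \<Rightarrow> real) \<Rightarrow> (nat \<Rightarrow> 'a \<Rightarrow> real) \<Rightarrow> nat \<Rightarrow> 'a \<Rightarrow> real" where
  "mu_hat n_obs Y U ZPD d \<omega> = ybar_obs n_obs Y \<omega> + sigma_hat n_obs Y U d \<omega> * ZPD d \<omega>"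

text \<open>Imputed value for the i-th missing unit (i < n_mis, i.e. unit n_obs+1+i), imputation d.\<close>
definition Y_imp ::
  "nat \<Rightarrow> (nat \<Rightarrow> 'a \<Rightarrow> real) \<Rightarrow> (nat \<Rightarrow> 'a \<Rightarrow> real) \<Rightarrow> (nat \<Rightarrow> 'a \<Rightarrow> real) \<Rightarrow>
   (nat \<Rightarrow> nat \<Rightarrow> 'a \<Rightarrow> real) \<Rightarrow> nat \<Rightarrow> nat \<Rightarrow> 'a \<Rightarrow> real" where
  "Y_imp n_obs Y U ZPD Zimp i d \<omega> =
     mu_hat n_obs Y U ZPD d \<omega> + sigma_hat n_obs Y U d \<omega> * Zimp i d \<omega>"

definition mu_SI ::
  "nat \<Rightarrow> nat \<Rightarrow> (nat \<Rightarrow> 'a \<Rightarrow> real) \<Rightarrow> (nat \<Rightarrow> 'a \<Rightarrow> real) \<Rightarrow> (nat \<Rightarrow> 'a \<Rightarrow> real) \<Rightarrow>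
   (nat \<Rightarrow> nat \<Rightarrow> 'a \<Rightarrow> real) \<Rightarrow> nat \<Rightarrow> 'a \<Rightarrow> real" where
  "mu_SI n_obs n_mis Y U ZPD Zimp d \<omega> =
     ((\<Sum>i<n_obs. Y i \<omega>) + (\<Sum>i<n_mis. Y_imp n_obs Y U ZPD Zimp i d \<omega>)) / real (n_obs + n_mis)"

definition mu_MI_PD ::
  "nat \<Rightarrow> nat \<Rightarrow> nat \<Rightarrow> (nat \<Rightarrow> 'a \<Rightarrow> real) \<Rightarrow> (nat \<Rightarrow> 'a \<Rightarrow> real) \<Rightarrow> (nat \<Rightarrow> 'a \<Rightarrow> real) \<Rightarrow>
   (nat \<Rightarrow> nat \<Rightarrow> 'a \<Rightarrow> real) \<Rightarrow> 'a \<Rightarrow> real" where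
  "mu_MI_PD n_obs n_mis D Y U ZPD Zimp \<omega> =
     (\<Sum>d<D. mu_SI n_obs n_mis Y U ZPD Zimp d \<omega>) / real D"

end

theory Submission
  imports Defs
begin


lemma gamma_half_nn:
  fixes a :: real assumes a: "a > 0"
  shows "(\<integral>\<^sup>+x. ennreal (indicator {0<..} x * x powr (a - 1) * exp (- x / 2)) \<partial>lborel)
         = ennreal (2 powr a * Gamma a)"
proof -
  let ?f = "\<lambda>x::real. ennreal (indicator {0<..} x * x powr (a - 1) * exp (- x / 2))"
  have "(\<integral>\<^sup>+x. ?f x \<partial>lborel) = \<bar>2::real\<bar> * (\<integral>\<^sup>+x. ?f (0 + 2 * x) \<partial>lborel)"
    by (rule nn_integral_real_affine) auto
  also have "(\<lambda>x. ?f (0 + 2 * x)) = (\<lambda>x. ennreal (2 powr (a - 1)) *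
      ennreal (indicator {0..} x * x powr (a - 1) / exp x))"
  proof
    fix x :: real
    show "?f (0 + 2 * x) = ennreal (2 powr (a - 1)) * ennreal (indicator {0..} x * x powr (a - 1) / exp x)"
      by (cases "x > 0"; cases "x = 0") (auto simp: indicator_def powr_mult exp_minus field_simps
           simp flip: ennreal_mult)
  qed
  also have "(\<integral>\<^sup>+x. ennreal (2 powr (a - 1)) * ennreal (indicator {0..} x * x powr (a - 1) / exp x) \<partial>lborel)
     = ennreal (2 powr (a - 1)) * Gamma a"
    by (subst nn_integral_cmult) (auto simp: Gamma_conv_nn_integral_real[OF a])
  also have "ennreal \<bar>2::real\<bar> * (ennreal (2 powr (a - 1)) * Gamma a) = ennreal (\<bar>2\<bar> * (2 powr (a - 1) * Gamma a))"
    by (metis ennreal_mult abs_ge_zero mult_nonneg_nonneg powr_ge_zero Gamma_real_nonneg a)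
  also have "\<bar>2::real\<bar> * (2 powr (a - 1) * Gamma a) = 2 powr a * Gamma a"
    by (simp add: powr_diff)
  finally show ?thesis .
qed

lemma chi2_inv_nn:
  fixes k :: real assumes k: "k > 2"
  shows "(\<integral>\<^sup>+x. ennreal (chi2_density k x) * ennreal (1 / \<bar>x\<bar>) \<partial>lborel) = ennreal (1 / (k - 2))"
proof -
  define a where "a = k / 2 - 1"
  have a: "a > 0" using k by (simp add: a_def)
  define C where "C = 1 / (2 powr (a + 1) * (a * Gamma a))"
  have C: "C \<ge> 0" using a by (simp add: C_def)
  have G: "Gamma (k / 2) = a * Gamma a"
    using Gamma_plus1[of a] a by (simp add: a_def nonpos_Ints_def)
  have "\<And>x. ennreal (chi2_density k x) * ennreal (1 / \<bar>x\<bar>)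
        = ennreal C * ennreal (indicator {0<..} x * x powr (a - 1) * exp (- x / 2))"
  proof -
    fix x :: real
    show "ennreal (chi2_density k x) * ennreal (1 / \<bar>x\<bar>)
        = ennreal C * ennreal (indicator {0<..} x * x powr (a - 1) * exp (- x / 2))"
    proof (cases "x > 0")
      case True
      have p: "x powr (k / 2 - 1) = x powr (a - 1) * x"
        using True powr_add[of x "k/2-2" 1] by (simp add: a_def)
      have q: "2 powr (k / 2) = 2 powr (a + 1)" by (simp add: a_def)
      have "chi2_density k x * (1 / \<bar>x\<bar>) = C * (x powr (a - 1) * exp (- x / 2))"
        using True a unfolding chi2_density_def C_def G p q
        by (simp add: field_simps)
      then show ?thesis using True a C
        by (simp add: ennreal_mult'[symmetric] G chi2_density_def flip: ennreal_mult)
    next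
      case False then show ?thesis by (simp add: chi2_density_def)
    qed
  qed
  then have "(\<integral>\<^sup>+x. ennreal (chi2_density k x) * ennreal (1 / \<bar>x\<bar>) \<partial>lborel)
     = ennreal C * ennreal (2 powr a * Gamma a)"
    using gamma_half_nn[OF a] by (simp add: nn_integral_cmult)
  also have "\<dots> = ennreal (1 / (k - 2))"
  proof -
    have g: "Gamma a > 0" using a by simp
    have "k - 2 = 2 * a" by (simp add: a_def)
    have "C * (2 powr a * Gamma a) = 1 / (k - 2)"
      unfolding C_def powr_add using a g \<open>k - 2 = 2 * a\<close> by (simp add: field_simps less_imp_neq[OF g, symmetric])
    then show ?thesis using C a by (simp flip: ennreal_mult)
  qed
  finally show ?thesis .
qed


definition yb :: "nat \<Rightarrow> (rv_idx \<Rightarrow> real) \<Rightarrow> real" where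
  "yb n x = (\<Sum>i<n. x (IdxY i)) / real n"
definition css :: "nat \<Rightarrow> (rv_idx \<Rightarrow> real) \<Rightarrow> real" where
  "css n x = (\<Sum>i<n. (x (IdxY i) - yb n x)\<^sup>2)"
definition sh :: "nat \<Rightarrow> nat \<Rightarrow> (rv_idx \<Rightarrow> real) \<Rightarrow> real" where
  "sh n d x = sqrt (css n x / x (IdxU d))"
definition ww :: "nat \<Rightarrow> nat \<Rightarrow> nat \<Rightarrow> (rv_idx \<Rightarrow> real) \<Rightarrow> real" where
  "ww n m d x = (real m * x (IdxZPD d) + (\<Sum>i<m. x (IdxZimp i d))) / real (n + m)"

lemma meas_yb: "IdxY ` {..<n} \<subseteq> K \<Longrightarrow> yb n \<in> borel_measurable (PiM K (\<lambda>_. borel))"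
  unfolding yb_def[abs_def] by measurable auto

lemma meas_css: "IdxY ` {..<n} \<subseteq> K \<Longrightarrow> css n \<in> borel_measurable (PiM K (\<lambda>_. borel))"
proof -
  assume a: "IdxY ` {..<n} \<subseteq> K"
  note meas_yb[OF a, measurable]
  show ?thesis unfolding css_def[abs_def] by measurable (insert a, auto)
qed

lemma meas_sh: "IdxY ` {..<n} \<subseteq> K \<Longrightarrow> IdxU d \<in> K \<Longrightarrow> sh n d \<in> borel_measurable (PiM K (\<lambda>_. borel))"
proof -
  assume a: "IdxY ` {..<n} \<subseteq> K" "IdxU d \<in> K"
  note meas_css[OF a(1), measurable]
  show ?thesis unfolding sh_def[abs_def] using a by measurable
qed

lemma meas_ww: "IdxZPD d \<in> K \<Longrightarrow> (\<lambda>i. IdxZimp i d) ` {..<m} \<subseteq> K \<Longrightarrow> ww n m d \<in> borel_measurable (PiM K (\<lambda>_. borel))"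
  unfolding ww_def[abs_def] by measurable auto


definition local_on :: "'i set \<Rightarrow> (('i \<Rightarrow> real) \<Rightarrow> real) \<Rightarrow> bool" where
  "local_on A f \<longleftrightarrow> (\<forall>x y. (\<forall>j\<in>A. x j = y j) \<longrightarrow> f x = f y)"

lemma local_on_restrict: "local_on A f \<Longrightarrow> f (restrict x A) = f x"
  unfolding local_on_def by auto

context prob_space begin

definition sqi :: "('a \<Rightarrow> real) \<Rightarrow> bool" where
  "sqi f \<longleftrightarrow> f \<in> borel_measurable M \<and> integrable M (\<lambda>x. (f x)\<^sup>2)"

lemma sqi_integrable: "sqi f \<Longrightarrow> integrable M f"
  unfolding sqi_def using square_integrable_imp_integrable by blast

lemma sqi_mult: assumes "sqi f" "sqi g" shows "integrable M (\<lambda>x. f x * g x)"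
proof (rule Bochner_Integration.integrable_bound[where f="\<lambda>x. (f x)\<^sup>2 + (g x)\<^sup>2"])
  show "integrable M (\<lambda>x. (f x)\<^sup>2 + (g x)\<^sup>2)" using assms unfolding sqi_def by auto
  show "(\<lambda>x. f x * g x) \<in> borel_measurable M" using assms unfolding sqi_def by auto
  show "AE x in M. norm (f x * g x) \<le> norm ((f x)\<^sup>2 + (g x)\<^sup>2)"
  proof (rule AE_I2)
    fix x
    have "2 * \<bar>f x\<bar> * \<bar>g x\<bar> \<le> (f x)\<^sup>2 + (g x)\<^sup>2"
      using sum_squares_bound[of "\<bar>f x\<bar>" "\<bar>g x\<bar>"] by (simp add: power2_abs)
    moreover have "0 \<le> \<bar>f x\<bar> * \<bar>g x\<bar>" by simp
    ultimately have "\<bar>f x\<bar> * \<bar>g x\<bar> \<le> (f x)\<^sup>2 + (g x)\<^sup>2" by linarith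
    then show "norm (f x * g x) \<le> norm ((f x)\<^sup>2 + (g x)\<^sup>2)"
      by (simp add: abs_mult)
  qed
qed

lemma sqi_add: assumes "sqi f" "sqi g" shows "sqi (\<lambda>x. f x + g x)"
proof -
  have "integrable M (\<lambda>x. ((f x)\<^sup>2 + (g x)\<^sup>2) + 2 * (f x * g x))"
    using assms sqi_mult[OF assms] unfolding sqi_def by auto
  moreover have "(\<lambda>x. (f x + g x)\<^sup>2) = (\<lambda>x. ((f x)\<^sup>2 + (g x)\<^sup>2) + 2 * (f x * g x))"
    by (simp add: power2_sum algebra_simps)
  ultimately show ?thesis using assms unfolding sqi_def by auto
qed

lemma sqi_cmult: assumes "sqi f" shows "sqi (\<lambda>x. c * f x)"
  using assms unfolding sqi_def by (auto simp: power_mult_distrib intro: borel_measurable_times)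

lemma sqi_const: "sqi (\<lambda>x. c)"
  unfolding sqi_def by simp

lemma sqi_sum: assumes "\<And>i. i \<in> A \<Longrightarrow> sqi (f i)" shows "sqi (\<lambda>x. \<Sum>i\<in>A. f i x)"
  using assms
proof (induction A rule: infinite_finite_induct)
  case (infinite A) then show ?case by (simp add: sqi_const)
next
  case empty then show ?case by (simp add: sqi_const)
next
  case (insert a A) then show ?case by (simp add: sqi_add)
qed

lemma sqi_div: assumes "sqi f" shows "sqi (\<lambda>x. f x / c)"
  using sqi_cmult[OF assms, of "1/c"] by simp

lemma sqi_diff: assumes "sqi f" "sqi g" shows "sqi (\<lambda>x. f x - g x)"
  using sqi_add[OF assms(1) sqi_cmult[OF assms(2), of "-1"]] by simp

lemma indep_groups:
  fixes X :: "'i \<Rightarrow> 'a \<Rightarrow> real" and f :: "'j \<Rightarrow> ('i \<Rightarrow> real) \<Rightarrow> real"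
  assumes ind: "indep_vars (\<lambda>_. borel) X I"
    and L: "finite L" and K: "\<And>j. j \<in> L \<Longrightarrow> K j \<subseteq> I" and disj: "disjoint_family_on K L"
    and f: "\<And>j. j \<in> L \<Longrightarrow> f j \<in> borel_measurable (PiM (K j) (\<lambda>_. borel))"
    and int: "\<And>j. j \<in> L \<Longrightarrow> integrable M (\<lambda>\<omega>. f j (restrict (\<lambda>i. X i \<omega>) (K j)))"
  shows "integrable M (\<lambda>\<omega>. \<Prod>j\<in>L. f j (restrict (\<lambda>i. X i \<omega>) (K j)))"
    and "(\<integral>\<omega>. (\<Prod>j\<in>L. f j (restrict (\<lambda>i. X i \<omega>) (K j))) \<partial>M)
         = (\<Prod>j\<in>L. \<integral>\<omega>. f j (restrict (\<lambda>i. X i \<omega>) (K j)) \<partial>M)"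
proof -
  have "indep_vars (\<lambda>j. PiM (K j) (\<lambda>_. borel)) (\<lambda>j \<omega>. restrict (\<lambda>i. X i \<omega>) (K j)) L"
    by (rule indep_vars_restrict[OF ind K disj])
  then have i2: "indep_vars (\<lambda>_. borel) (\<lambda>j \<omega>. f j (restrict (\<lambda>i. X i \<omega>) (K j))) L"
    by (rule indep_vars_compose2) (rule f)
  show "integrable M (\<lambda>\<omega>. \<Prod>j\<in>L. f j (restrict (\<lambda>i. X i \<omega>) (K j)))"
    by (rule indep_vars_integrable[OF L i2 int])
  show "(\<integral>\<omega>. (\<Prod>j\<in>L. f j (restrict (\<lambda>i. X i \<omega>) (K j))) \<partial>M)
         = (\<Prod>j\<in>L. \<integral>\<omega>. f j (restrict (\<lambda>i. X i \<omega>) (K j)) \<partial>M)"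
    by (rule indep_vars_lebesgue_integral[OF L i2 int])
qed


lemma indep2:
  fixes X :: "'i \<Rightarrow> 'a \<Rightarrow> real"
  assumes ind: "indep_vars (\<lambda>_. borel) X I"
    and AB: "A \<subseteq> I" "B \<subseteq> I" "A \<inter> B = {}"
    and f: "f \<in> borel_measurable (PiM A (\<lambda>_. borel))" "local_on A f"
    and g: "g \<in> borel_measurable (PiM B (\<lambda>_. borel))" "local_on B g"
    and int: "integrable M (\<lambda>\<omega>. f (\<lambda>i. X i \<omega>))" "integrable M (\<lambda>\<omega>. g (\<lambda>i. X i \<omega>))"
  shows "integrable M (\<lambda>\<omega>. f (\<lambda>i. X i \<omega>) * g (\<lambda>i. X i \<omega>))"
    and "(\<integral>\<omega>. f (\<lambda>i. X i \<omega>) * g (\<lambda>i. X i \<omega>) \<partial>M)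
         = (\<integral>\<omega>. f (\<lambda>i. X i \<omega>) \<partial>M) * (\<integral>\<omega>. g (\<lambda>i. X i \<omega>) \<partial>M)"
proof -
  define K where "K = (\<lambda>j::nat. if j = 0 then A else B)"
  define F where "F = (\<lambda>j::nat. if j = 0 then f else g)"
  have L: "finite {0::nat, 1}" by simp
  have K: "\<And>j. j \<in> {0,1} \<Longrightarrow> K j \<subseteq> I" using AB by (auto simp: K_def)
  have disj: "disjoint_family_on K {0,1}" using AB by (auto simp: disjoint_family_on_def K_def)
  have Fm: "\<And>j. j \<in> {0,1} \<Longrightarrow> F j \<in> borel_measurable (PiM (K j) (\<lambda>_. borel))"
    using f g by (auto simp: K_def F_def)
  have Fi: "\<And>j. j \<in> {0,1} \<Longrightarrow> integrable M (\<lambda>\<omega>. F j (restrict (\<lambda>i. X i \<omega>) (K j)))"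
    using int f(2) g(2) by (auto simp: F_def K_def local_on_restrict)
  note r = indep_groups[OF ind L K disj Fm Fi]
  have e: "(\<lambda>\<omega>. \<Prod>j\<in>{0,1}. F j (restrict (\<lambda>i. X i \<omega>) (K j))) = (\<lambda>\<omega>. f (\<lambda>i. X i \<omega>) * g (\<lambda>i. X i \<omega>))"
    by (simp add: F_def K_def local_on_restrict f(2) g(2))
  have e0: "(\<lambda>\<omega>. F 0 (restrict (\<lambda>i. X i \<omega>) (K 0))) = (\<lambda>\<omega>. f (\<lambda>i. X i \<omega>))"
    by (simp add: F_def K_def local_on_restrict f(2))
  have e1: "(\<lambda>\<omega>. F 1 (restrict (\<lambda>i. X i \<omega>) (K 1))) = (\<lambda>\<omega>. g (\<lambda>i. X i \<omega>))"
    by (simp add: F_def K_def local_on_restrict g(2))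
  show "integrable M (\<lambda>\<omega>. f (\<lambda>i. X i \<omega>) * g (\<lambda>i. X i \<omega>))"
    using r(1) unfolding e .
  have "(\<integral>\<omega>. f (\<lambda>i. X i \<omega>) * g (\<lambda>i. X i \<omega>) \<partial>M)
     = (\<Prod>j\<in>{0::nat,1}. \<integral>\<omega>. F j (restrict (\<lambda>i. X i \<omega>) (K j)) \<partial>M)"
    using r(2) unfolding e .
  also have "\<dots> = (\<integral>\<omega>. F 0 (restrict (\<lambda>i. X i \<omega>) (K 0)) \<partial>M) * (\<integral>\<omega>. F 1 (restrict (\<lambda>i. X i \<omega>) (K 1)) \<partial>M)"
    by simp
  finally show "(\<integral>\<omega>. f (\<lambda>i. X i \<omega>) * g (\<lambda>i. X i \<omega>) \<partial>M)
         = (\<integral>\<omega>. f (\<lambda>i. X i \<omega>) \<partial>M) * (\<integral>\<omega>. g (\<lambda>i. X i \<omega>) \<partial>M)"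
    unfolding e0 e1 .
qed

lemma indep3:
  fixes X :: "'i \<Rightarrow> 'a \<Rightarrow> real"
  assumes ind: "indep_vars (\<lambda>_. borel) X I"
    and AB: "A \<subseteq> I" "B \<subseteq> I" "C \<subseteq> I" "A \<inter> B = {}" "A \<inter> C = {}" "B \<inter> C = {}"
    and f: "f \<in> borel_measurable (PiM A (\<lambda>_. borel))" "local_on A f"
    and g: "g \<in> borel_measurable (PiM B (\<lambda>_. borel))" "local_on B g"
    and h: "h \<in> borel_measurable (PiM C (\<lambda>_. borel))" "local_on C h"
    and int: "integrable M (\<lambda>\<omega>. f (\<lambda>i. X i \<omega>))" "integrable M (\<lambda>\<omega>. g (\<lambda>i. X i \<omega>))"
      "integrable M (\<lambda>\<omega>. h (\<lambda>i. X i \<omega>))"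
  shows "(\<integral>\<omega>. f (\<lambda>i. X i \<omega>) * (g (\<lambda>i. X i \<omega>) * h (\<lambda>i. X i \<omega>)) \<partial>M)
         = (\<integral>\<omega>. f (\<lambda>i. X i \<omega>) \<partial>M) * ((\<integral>\<omega>. g (\<lambda>i. X i \<omega>) \<partial>M) * (\<integral>\<omega>. h (\<lambda>i. X i \<omega>) \<partial>M))"
proof -
  define K where "K = (\<lambda>j::nat. if j = 0 then A else if j = 1 then B else C)"
  define F where "F = (\<lambda>j::nat. if j = 0 then f else if j = 1 then g else h)"
  have L: "finite {0::nat, 1, 2}" by simp
  have K: "\<And>j. j \<in> {0,1,2} \<Longrightarrow> K j \<subseteq> I" using AB by (auto simp: K_def)
  have disj: "disjoint_family_on K {0,1,2}" using AB by (auto simp: disjoint_family_on_def K_def)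
  have Fm: "\<And>j. j \<in> {0,1,2} \<Longrightarrow> F j \<in> borel_measurable (PiM (K j) (\<lambda>_. borel))"
    using f g h by (auto simp: K_def F_def)
  have Fi: "\<And>j. j \<in> {0,1,2} \<Longrightarrow> integrable M (\<lambda>\<omega>. F j (restrict (\<lambda>i. X i \<omega>) (K j)))"
    using int f(2) g(2) h(2) by (auto simp: F_def K_def local_on_restrict)
  note r = indep_groups[OF ind L K disj Fm Fi]
  have e: "(\<lambda>\<omega>. \<Prod>j\<in>{0,1,2}. F j (restrict (\<lambda>i. X i \<omega>) (K j)))
     = (\<lambda>\<omega>. f (\<lambda>i. X i \<omega>) * (g (\<lambda>i. X i \<omega>) * h (\<lambda>i. X i \<omega>)))"
    by (simp add: F_def K_def local_on_restrict f(2) g(2) h(2))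
  have e0: "(\<lambda>\<omega>. F 0 (restrict (\<lambda>i. X i \<omega>) (K 0))) = (\<lambda>\<omega>. f (\<lambda>i. X i \<omega>))"
    by (simp add: F_def K_def local_on_restrict f(2))
  have e1: "(\<lambda>\<omega>. F 1 (restrict (\<lambda>i. X i \<omega>) (K 1))) = (\<lambda>\<omega>. g (\<lambda>i. X i \<omega>))"
    by (simp add: F_def K_def local_on_restrict g(2))
  have e2: "(\<lambda>\<omega>. F 2 (restrict (\<lambda>i. X i \<omega>) (K 2))) = (\<lambda>\<omega>. h (\<lambda>i. X i \<omega>))"
    by (simp add: F_def K_def local_on_restrict h(2))
  have "(\<integral>\<omega>. f (\<lambda>i. X i \<omega>) * (g (\<lambda>i. X i \<omega>) * h (\<lambda>i. X i \<omega>)) \<partial>M)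
     = (\<Prod>j\<in>{0::nat,1,2}. \<integral>\<omega>. F j (restrict (\<lambda>i. X i \<omega>) (K j)) \<partial>M)"
    using r(2) unfolding e .
  also have "\<dots> = (\<integral>\<omega>. F 0 (restrict (\<lambda>i. X i \<omega>) (K 0)) \<partial>M) * ((\<integral>\<omega>. F 1 (restrict (\<lambda>i. X i \<omega>) (K 1)) \<partial>M)
       * (\<integral>\<omega>. F 2 (restrict (\<lambda>i. X i \<omega>) (K 2)) \<partial>M))"
    by simp
  finally show ?thesis unfolding e0 e1 e2 .
qed

lemma sum_sq_indep:
  fixes X :: "'i \<Rightarrow> 'a \<Rightarrow> real"
  assumes ind: "indep_vars (\<lambda>_. borel) X I" and J: "finite J" "J \<subseteq> I"
    and int: "\<And>j. j \<in> J \<Longrightarrow> integrable M (\<lambda>\<omega>. (X j \<omega>)\<^sup>2)"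
    and mean: "\<And>j. j \<in> J \<Longrightarrow> expectation (X j) = m j"
  shows "expectation (\<lambda>\<omega>. (\<Sum>j\<in>J. c j * (X j \<omega> - m j))\<^sup>2)
         = (\<Sum>j\<in>J. (c j)\<^sup>2 * expectation (\<lambda>\<omega>. (X j \<omega> - m j)\<^sup>2))"
proof -
  have rv: "\<And>j. j \<in> J \<Longrightarrow> X j \<in> borel_measurable M"
    using ind J unfolding indep_vars_def by auto
  have sq: "\<And>j. j \<in> J \<Longrightarrow> sqi (\<lambda>\<omega>. X j \<omega> - m j)"
    using rv int by (intro sqi_diff) (auto simp: sqi_def)
  have ic: "\<And>j. j \<in> J \<Longrightarrow> integrable M (\<lambda>\<omega>. X j \<omega> - m j)"
    using sq sqi_integrable by blast
  have e0: "expectation (\<lambda>\<omega>. X j \<omega> - m j) = 0" if j: "j \<in> J" for j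
  proof -
    have iX: "integrable M (X j)" using square_integrable_imp_integrable[OF rv[OF j] int[OF j]] .
    have "expectation (\<lambda>\<omega>. X j \<omega> - m j) = expectation (X j) - expectation (\<lambda>\<omega>. m j)"
      by (rule Bochner_Integration.integral_diff[OF iX]) simp
    then show ?thesis using mean[OF j] by (simp add: prob_space)
  qed
  have ind2: "indep_vars (\<lambda>_. borel) (\<lambda>j \<omega>. X j \<omega> - m j) I"
    by (rule indep_vars_compose2[OF ind]) auto
  have cross: "expectation (\<lambda>\<omega>. (X i \<omega> - m i) * (X j \<omega> - m j)) = 0"
    if "i \<in> J" "j \<in> J" "i \<noteq> j" for i j
  proof -
    have i3: "indep_vars (\<lambda>_. borel) (\<lambda>j \<omega>. X j \<omega> - m j) {i, j}"
      by (rule indep_vars_subset[OF ind2]) (use that J in auto)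
    have "expectation (\<lambda>\<omega>. \<Prod>l\<in>{i,j}. X l \<omega> - m l) = (\<Prod>l\<in>{i,j}. expectation (\<lambda>\<omega>. X l \<omega> - m l))"
      by (rule indep_vars_lebesgue_integral[OF _ i3]) (use ic that in auto)
    then show ?thesis using that e0 by simp
  qed
  have "(\<lambda>\<omega>. (\<Sum>j\<in>J. c j * (X j \<omega> - m j))\<^sup>2)
      = (\<lambda>\<omega>. \<Sum>i\<in>J. \<Sum>j\<in>J. c i * c j * ((X i \<omega> - m i) * (X j \<omega> - m j)))"
    by (simp add: power2_eq_square sum_product mult_ac)
  then have "expectation (\<lambda>\<omega>. (\<Sum>j\<in>J. c j * (X j \<omega> - m j))\<^sup>2)
     = (\<Sum>i\<in>J. \<Sum>j\<in>J. c i * c j * expectation (\<lambda>\<omega>. (X i \<omega> - m i) * (X j \<omega> - m j)))"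
    using sq by (simp add: Bochner_Integration.integral_sum sqi_mult)
  also have "\<dots> = (\<Sum>i\<in>J. (c i)\<^sup>2 * expectation (\<lambda>\<omega>. (X i \<omega> - m i)\<^sup>2))"
  proof (rule sum.cong[OF refl])
    fix i assume i: "i \<in> J"
    have "(\<Sum>j\<in>J. c i * c j * expectation (\<lambda>\<omega>. (X i \<omega> - m i) * (X j \<omega> - m j)))
        = (\<Sum>j\<in>J. if j = i then (c i)\<^sup>2 * expectation (\<lambda>\<omega>. (X i \<omega> - m i)\<^sup>2) else 0)"
      using cross i by (intro sum.cong) (auto simp: power2_eq_square)
    also have "\<dots> = (c i)\<^sup>2 * expectation (\<lambda>\<omega>. (X i \<omega> - m i)\<^sup>2)"
      using i J by (simp add: sum.delta')
    finally show "(\<Sum>j\<in>J. c i * c j * expectation (\<lambda>\<omega>. (X i \<omega> - m i) * (X j \<omega> - m j)))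
        = (c i)\<^sup>2 * expectation (\<lambda>\<omega>. (X i \<omega> - m i)\<^sup>2)" .
  qed
  finally show ?thesis .
qed

end


definition good :: "'i set \<Rightarrow> (('i \<Rightarrow> real) \<Rightarrow> real) \<Rightarrow> bool" where
  "good K f \<longleftrightarrow> f \<in> borel_measurable (PiM K (\<lambda>_. borel)) \<and> (\<forall>x y. (\<forall>j\<in>K. x j = y j) \<longrightarrow> f x = f y)"

lemma good_local: "good K f \<Longrightarrow> local_on K f"
  unfolding good_def local_on_def by (elim conjE)

lemma good_meas: "good K f \<Longrightarrow> f \<in> borel_measurable (PiM K (\<lambda>_. borel))"
  unfolding good_def by blast

lemma good_eq: "good K f \<Longrightarrow> \<forall>j\<in>K. x j = y j \<Longrightarrow> f x = f y"
  unfolding good_def by blast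

lemma good_restrict: "good K f \<Longrightarrow> f (restrict x K) = f x"
  by (erule good_eq) simp

lemma good_mono: assumes "good K f" "K \<subseteq> K'" shows "good K' f"
proof -
  have eq: "f = (\<lambda>x. f (restrict x K))" using good_restrict[OF assms(1)] by simp
  have "(\<lambda>x. f (restrict x K)) \<in> borel_measurable (PiM K' (\<lambda>_. borel))"
    by (rule measurable_compose[OF measurable_restrict_subset[OF assms(2)] good_meas[OF assms(1)]])
  then have "f \<in> borel_measurable (PiM K' (\<lambda>_. borel))" by (subst eq) assumption
  moreover have "\<forall>x y. (\<forall>j\<in>K'. x j = y j) \<longrightarrow> f x = f y" using assms unfolding good_def by blast
  ultimately show ?thesis unfolding good_def by blast
qed

lemma good_mult: "good K f \<Longrightarrow> good K g \<Longrightarrow> good K (\<lambda>x. f x * g x)"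
proof -
  assume a: "good K f" "good K g"
  have "(\<lambda>x. f x * g x) \<in> borel_measurable (PiM K (\<lambda>_. borel))"
    using a[THEN good_meas] by measurable
  moreover have "\<forall>x y. (\<forall>j\<in>K. x j = y j) \<longrightarrow> f x * g x = f y * g y"
  proof (intro allI impI)
    fix x y :: "'a \<Rightarrow> real" assume h: "\<forall>j\<in>K. x j = y j"
    have "f x = f y" by (rule good_eq[OF a(1) h])
    moreover have "g x = g y" by (rule good_eq[OF a(2) h])
    ultimately show "f x * g x = f y * g y" by simp
  qed
  ultimately show ?thesis unfolding good_def by blast
qed

lemma good_add: "good K f \<Longrightarrow> good K g \<Longrightarrow> good K (\<lambda>x. f x + g x)"
proof -
  assume a: "good K f" "good K g"
  have "(\<lambda>x. f x + g x) \<in> borel_measurable (PiM K (\<lambda>_. borel))"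
    using a[THEN good_meas] by measurable
  moreover have "\<forall>x y. (\<forall>j\<in>K. x j = y j) \<longrightarrow> f x + g x = f y + g y"
  proof (intro allI impI)
    fix x y :: "'a \<Rightarrow> real" assume h: "\<forall>j\<in>K. x j = y j"
    have "f x = f y" by (rule good_eq[OF a(1) h])
    moreover have "g x = g y" by (rule good_eq[OF a(2) h])
    ultimately show "f x + g x = f y + g y" by simp
  qed
  ultimately show ?thesis unfolding good_def by blast
qed

lemma good_const: "good K (\<lambda>x. c)"
  unfolding good_def by auto

lemma good_cmult: "good K f \<Longrightarrow> good K (\<lambda>x. c * f x)"
  using good_mult[OF good_const] by blast

lemma good_diff: "good K f \<Longrightarrow> good K g \<Longrightarrow> good K (\<lambda>x. f x - g x)"
  using good_add[of K f "\<lambda>x. (-1) * g x"] good_cmult[of K g "-1"] by simp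

lemma good_rv:
  assumes "good K f" "K \<subseteq> I" "\<And>j. j \<in> I \<Longrightarrow> X j \<in> borel_measurable M"
  shows "(\<lambda>\<omega>. f (\<lambda>j. X j \<omega>)) \<in> borel_measurable M"
proof -
  have "(\<lambda>\<omega>. f (restrict (\<lambda>j. X j \<omega>) K)) \<in> borel_measurable M"
    by (rule measurable_compose[OF measurable_restrict good_meas[OF assms(1)]]) (use assms in auto)
  then show ?thesis by (simp only: good_restrict[OF assms(1)])
qed

lemma good_yb: "good (IdxY ` {..<n}) (yb n)"
  unfolding good_def using meas_yb[of n "IdxY ` {..<n}"] by (auto simp: yb_def intro!: sum.cong)

lemma good_css: "good (IdxY ` {..<n}) (css n)"
proof -
  have l: "yb n x = yb n y" if "\<forall>j\<in>IdxY ` {..<n}. x j = y j" for x y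
    using good_yb[of n] that unfolding good_def by blast
  have "css n x = css n y" if "\<forall>j\<in>IdxY ` {..<n}. x j = y j" for x y
    unfolding css_def using l[OF that] that by (intro sum.cong) auto
  then show ?thesis
    unfolding good_def using meas_css[of n "IdxY ` {..<n}"] by blast
qed

lemma good_sh: "good (insert (IdxU d) (IdxY ` {..<n})) (sh n d)"
proof -
  have l: "css n x = css n y" if "\<forall>j\<in>insert (IdxU d) (IdxY ` {..<n}). x j = y j" for x y
    using good_css[of n] that unfolding good_def by blast
  show ?thesis
    unfolding good_def using meas_sh[of n "insert (IdxU d) (IdxY ` {..<n})" d] l by (auto simp: sh_def)
qed

lemma good_ww: "good (insert (IdxZPD d) ((\<lambda>i. IdxZimp i d) ` {..<m})) (ww n m d)"
  unfolding good_def using meas_ww[of d "insert (IdxZPD d) ((\<lambda>i. IdxZimp i d) ` {..<m})" m n]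
  by (auto simp: ww_def intro!: sum.cong)

lemma good_ui: "good {IdxU d} (\<lambda>x. 1 / \<bar>x (IdxU d)\<bar>)"
  unfolding good_def by auto measurable

lemma (in prob_space) normal_facts:
  assumes s: "0 < s" and D: "distributed M lborel Z (normal_density a s)"
  shows "sqi Z" "expectation Z = a" "expectation (\<lambda>\<omega>. (Z \<omega> - a)\<^sup>2) = s\<^sup>2"
proof -
  have m: "Z \<in> borel_measurable M" using distributed_measurable[OF D] by simp
  have "integrable lborel (\<lambda>x. normal_density a s x * (x - a)^2)"
    by (rule integrable_normal_moment[OF s])
  then have i2: "integrable M (\<lambda>\<omega>. (Z \<omega> - a)^2)"
    using distributed_integrable[OF D, of "\<lambda>x. (x - a)^2"] by simp
  have "sqi (\<lambda>\<omega>. (Z \<omega> - a) + a)"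
    by (rule sqi_add) (use m i2 in \<open>auto simp: sqi_def sqi_const\<close>)
  then show "sqi Z" by simp
  show e: "expectation Z = a" by (rule normal_distributed_expectation[OF s D])
  show "expectation (\<lambda>\<omega>. (Z \<omega> - a)\<^sup>2) = s\<^sup>2"
    using normal_distributed_variance[OF s D] e by simp
qed


theorem mainTheorem5:
  fixes M :: "'a measure"
    and n_obs n_mis D :: nat
    and \<mu> \<sigma> \<nu>_prior :: real
    and Y U ZPD :: "nat \<Rightarrow> 'a \<Rightarrow> real"
    and Zimp :: "nat \<Rightarrow> nat \<Rightarrow> 'a \<Rightarrow> real"
  assumes "prob_space M"
    and "n_obs \<ge> 2" and "n_mis \<ge> 1" and "D \<ge> 1"
    and "\<sigma> > 0"
    and "real n_obs + \<nu>_prior > 3"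
    and "\<And>i. i < n_obs \<Longrightarrow> distributed M lborel (Y i) (normal_density \<mu> \<sigma>)"
    and "\<And>d. d < D \<Longrightarrow>
           distributed M lborel (U d) (chi2_density (\<nu>_prior + real n_obs - 1))"
    and "\<And>d. d < D \<Longrightarrow>
           distributed M lborel (ZPD d) (normal_density 0 (1 / sqrt (real n_obs)))"
    and "\<And>i d. i < n_mis \<Longrightarrow> d < D \<Longrightarrow>
           distributed M lborel (Zimp i d) std_normal_density"
    and "prob_space.indep_vars M (\<lambda>_. borel) (all_rvs Y U ZPD Zimp) (rv_index_set n_obs n_mis D)"
  shows "integrable M (mu_MI_PD n_obs n_mis D Y U ZPD Zimp)
    \<and> integrable M (\<lambda>\<omega>. (mu_MI_PD n_obs n_mis D Y U ZPD Zimp \<omega>)\<^sup>2)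
    \<and> prob_space.expectation M (mu_MI_PD n_obs n_mis D Y U ZPD Zimp) = \<mu>
    \<and> prob_space.variance M (mu_MI_PD n_obs n_mis D Y U ZPD Zimp) =
        \<sigma>\<^sup>2 / real n_obs *
        (1 + real n_mis * (real n_obs - 1) /
             (real D * real (n_obs + n_mis) * (real n_obs + \<nu>_prior - 3)))"
proof -
  interpret prob_space M by (rule assms(1))
  define X where "X = all_rvs Y U ZPD Zimp"
  define I where "I = rv_index_set n_obs n_mis D"
  define k where "k = \<nu>_prior + real n_obs - 1"
  define N where "N = n_obs + n_mis"
  have k2: "k > 2" using assms(6) by (simp add: k_def)
  have npos: "real n_obs > 0" using assms(2) by simp
  have Npos: "real N > 0" using assms(2) by (simp add: N_def)
  have Dpos: "real D > 0" using assms(4) by simp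
  have ind: "indep_vars (\<lambda>_. borel) X I" using assms(11) by (simp add: X_def I_def)
  have rv: "\<And>j. j \<in> I \<Longrightarrow> X j \<in> borel_measurable M" using ind unfolding indep_vars_def by auto
  have XY[simp]: "X (IdxY i) = Y i" "X (IdxU d) = U d" "X (IdxZPD d) = ZPD d"
    "X (IdxZimp i d) = Zimp i d" for i d by (simp_all add: X_def all_rvs_def)
  define Xw where "Xw \<omega> = (\<lambda>j. X j \<omega>)" for \<omega>
  define KY where "KY = IdxY ` {..<n_obs}"
  define KW where "KW d = insert (IdxZPD d) ((\<lambda>i. IdxZimp i d) ` {..<n_mis})" for d
  have KY_I: "KY \<subseteq> I" by (auto simp: KY_def I_def rv_index_set_def)
  have KW_I: "d < D \<Longrightarrow> KW d \<subseteq> I" for d by (auto simp: KW_def I_def rv_index_set_def)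
  have U_I: "d < D \<Longrightarrow> IdxU d \<in> I" for d by (auto simp: I_def rv_index_set_def)
  have KY_KW: "KY \<inter> KW d = {}" for d by (auto simp: KY_def KW_def)
  have U_KY: "IdxU d \<notin> KY" for d by (auto simp: KY_def)
  have U_KW: "IdxU d \<notin> KW d'" for d d' by (auto simp: KW_def)
  have KW_KW: "d \<noteq> d' \<Longrightarrow> KW d \<inter> KW d' = {}" for d d' by (auto simp: KW_def)

  have Ym: "sqi (Y i)" "expectation (Y i) = \<mu>" "expectation (\<lambda>\<omega>. (Y i \<omega> - \<mu>)\<^sup>2) = \<sigma>\<^sup>2"
    if "i < n_obs" for i using normal_facts[OF assms(5) assms(7)[OF that]] by auto
  have sn: "0 < 1 / sqrt (real n_obs)" using npos by simp
  have Zpm: "sqi (ZPD d)" "expectation (ZPD d) = 0" "expectation (\<lambda>\<omega>. (ZPD d \<omega> - 0)\<^sup>2) = 1 / real n_obs"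
    if "d < D" for d using normal_facts[OF sn assms(9)[OF that]] npos by (auto simp: power_divide)
  have Zim: "sqi (Zimp i d)" "expectation (Zimp i d) = 0" "expectation (\<lambda>\<omega>. (Zimp i d \<omega> - 0)\<^sup>2) = 1"
    if "i < n_mis" "d < D" for i d using normal_facts[OF _ assms(10)[OF that]] by auto
  have Uinv: "integrable M (\<lambda>\<omega>. 1 / \<bar>U d \<omega>\<bar>) \<and> expectation (\<lambda>\<omega>. 1 / \<bar>U d \<omega>\<bar>) = 1 / (k - 2)"
    if "d < D" for d
  proof -
    have DU: "distributed M lborel (U d) (\<lambda>x. ennreal (chi2_density k x))"
      using assms(8)[OF that] by (simp add: k_def)
    have "(\<integral>\<^sup>+\<omega>. ennreal (1 / \<bar>U d \<omega>\<bar>) \<partial>M) = (\<integral>\<^sup>+x. ennreal (chi2_density k x) * ennreal (1 / \<bar>x\<bar>) \<partial>lborel)"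
      by (rule distributed_nn_integral[OF DU, symmetric]) simp
    also have "\<dots> = ennreal (1 / (k - 2))" by (rule chi2_inv_nn[OF k2])
    finally have "(\<integral>\<^sup>+\<omega>. ennreal (1 / \<bar>U d \<omega>\<bar>) \<partial>M) = ennreal (1 / (k - 2))" .
    moreover have "(\<lambda>\<omega>. 1 / \<bar>U d \<omega>\<bar>) \<in> borel_measurable M"
      using rv[OF U_I[OF that]] by simp
    ultimately show ?thesis using k2 by (subst (asm) nn_integral_eq_integrable) auto
  qed

  define fa where "fa x = yb n_obs x - \<mu>" for x
  have good_fa: "good KY fa" unfolding fa_def[abs_def] KY_def by (intro good_diff good_yb good_const)
  have fa_sum: "fa (Xw \<omega>) = (\<Sum>j\<in>KY. (1 / real n_obs) * (X j \<omega> - \<mu>))" for \<omega>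
  proof -
    have "(\<Sum>j\<in>KY. (1 / real n_obs) * (X j \<omega> - \<mu>)) = (\<Sum>i<n_obs. (1 / real n_obs) * (Y i \<omega> - \<mu>))"
      unfolding KY_def by (subst sum.reindex) (auto simp: inj_on_def)
    also have "\<dots> = (1 / real n_obs) * ((\<Sum>i<n_obs. Y i \<omega>) - real n_obs * \<mu>)"
      by (simp add: sum_distrib_left sum_subtractf right_diff_distrib)
    also have "\<dots> = (\<Sum>i<n_obs. Y i \<omega>) / real n_obs - \<mu>"
      using npos by (simp add: field_simps)
    finally show ?thesis by (simp add: fa_def yb_def Xw_def)
  qed
  have KYfin: "finite KY" and KYcard: "card KY = n_obs"
    by (auto simp: KY_def card_image inj_on_def)
  have YJ: "\<And>j. j \<in> KY \<Longrightarrow> integrable M (\<lambda>\<omega>. (X j \<omega>)\<^sup>2)" "\<And>j. j \<in> KY \<Longrightarrow> expectation (X j) = \<mu>"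
    "\<And>j. j \<in> KY \<Longrightarrow> expectation (\<lambda>\<omega>. (X j \<omega> - \<mu>)\<^sup>2) = \<sigma>\<^sup>2"
    using Ym by (auto simp: KY_def sqi_def)
  have sqi_XY: "\<And>j. j \<in> KY \<Longrightarrow> sqi (X j)" using Ym by (auto simp: KY_def)
  have fa_sqi: "sqi (\<lambda>\<omega>. fa (Xw \<omega>))"
    unfolding fa_sum by (intro sqi_sum sqi_cmult sqi_diff sqi_XY sqi_const)
  have fa_E: "expectation (\<lambda>\<omega>. fa (Xw \<omega>)) = 0"
  proof -
    have "expectation (\<lambda>\<omega>. fa (Xw \<omega>)) = (\<Sum>j\<in>KY. (1 / real n_obs) * expectation (\<lambda>\<omega>. X j \<omega> - \<mu>))"
    proof -
      have intg: "\<And>j. j \<in> KY \<Longrightarrow> integrable M (\<lambda>\<omega>. (1 / real n_obs) * (X j \<omega> - \<mu>))"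
        by (intro sqi_integrable sqi_cmult sqi_diff sqi_XY sqi_const)
      show ?thesis unfolding fa_sum
        by (subst Bochner_Integration.integral_sum[OF intg]) (auto simp del: integral_mult_right_zero)
    qed
    also have "\<dots> = 0"
      by (intro sum.neutral ballI) (simp add: Bochner_Integration.integral_diff sqi_integrable sqi_XY YJ prob_space)
    finally show ?thesis .
  qed
  have fa_E2: "expectation (\<lambda>\<omega>. (fa (Xw \<omega>))\<^sup>2) = \<sigma>\<^sup>2 / real n_obs"
  proof -
    have "expectation (\<lambda>\<omega>. (fa (Xw \<omega>))\<^sup>2) = (\<Sum>j\<in>KY. (1 / real n_obs)\<^sup>2 * expectation (\<lambda>\<omega>. (X j \<omega> - \<mu>)\<^sup>2))"
      unfolding fa_sum by (rule sum_sq_indep[OF ind KYfin KY_I YJ(1) YJ(2)])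
    also have "\<dots> = (\<Sum>j\<in>KY. (1 / real n_obs)\<^sup>2 * \<sigma>\<^sup>2)"
      by (intro sum.cong refl) (simp add: YJ(3))
    also have "\<dots> = \<sigma>\<^sup>2 / real n_obs"
      using npos by (simp add: KYcard power2_eq_square)
    finally show ?thesis .
  qed

  have css_eq: "css n_obs (Xw \<omega>) = (\<Sum>i<n_obs. (Y i \<omega> - \<mu>)\<^sup>2) - real n_obs * (fa (Xw \<omega>))\<^sup>2" for \<omega>
  proof -
    define b where "b = yb n_obs (Xw \<omega>) - \<mu>"
    have s1: "(\<Sum>i<n_obs. Y i \<omega> - \<mu>) = real n_obs * b"
      using npos by (simp add: b_def yb_def Xw_def sum_subtractf field_simps)
    have "css n_obs (Xw \<omega>) = (\<Sum>i<n_obs. (Y i \<omega> - \<mu>)\<^sup>2 - 2 * b * (Y i \<omega> - \<mu>) + b\<^sup>2)"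
      unfolding css_def by (intro sum.cong refl) (simp add: b_def Xw_def power2_eq_square algebra_simps)
    also have "\<dots> = (\<Sum>i<n_obs. (Y i \<omega> - \<mu>)\<^sup>2) - 2 * b * (\<Sum>i<n_obs. Y i \<omega> - \<mu>) + real n_obs * b\<^sup>2"
    proof -
      have "(\<Sum>i<n_obs. 2 * b * (Y i \<omega> - \<mu>)) = 2 * b * (\<Sum>i<n_obs. Y i \<omega> - \<mu>)"
        by (rule sum_distrib_left[symmetric])
      then show ?thesis by (simp only: sum.distrib sum_subtractf) simp
    qed
    also have "\<dots> = (\<Sum>i<n_obs. (Y i \<omega> - \<mu>)\<^sup>2) - real n_obs * b\<^sup>2"
      unfolding s1 by (simp add: power2_eq_square)
    finally show ?thesis by (simp add: b_def fa_def)
  qed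
  have css_nonneg: "css n_obs x \<ge> 0" for x unfolding css_def by (simp add: sum_nonneg)
  have Yc_int: "integrable M (\<lambda>\<omega>. (Y i \<omega> - \<mu>)\<^sup>2)" if "i < n_obs" for i
    using sqi_diff[OF Ym(1)[OF that] sqi_const[of \<mu>]] by (simp add: sqi_def)
  have fa2_int: "integrable M (\<lambda>\<omega>. (fa (Xw \<omega>))\<^sup>2)" using fa_sqi by (simp add: sqi_def)
  have css_int: "integrable M (\<lambda>\<omega>. css n_obs (Xw \<omega>))"
    unfolding css_eq
    by (intro Bochner_Integration.integrable_diff Bochner_Integration.integrable_sum integrable_mult_right Yc_int fa2_int) auto
  have css_E: "expectation (\<lambda>\<omega>. css n_obs (Xw \<omega>)) = (real n_obs - 1) * \<sigma>\<^sup>2"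
  proof -
    have "expectation (\<lambda>\<omega>. css n_obs (Xw \<omega>))
        = (\<Sum>i<n_obs. expectation (\<lambda>\<omega>. (Y i \<omega> - \<mu>)\<^sup>2)) - real n_obs * expectation (\<lambda>\<omega>. (fa (Xw \<omega>))\<^sup>2)"
      unfolding css_eq
      by (subst Bochner_Integration.integral_diff)
        (auto intro!: Bochner_Integration.integrable_sum integrable_mult_right Yc_int fa2_int simp: Bochner_Integration.integral_sum Yc_int)
    also have "\<dots> = (\<Sum>i<n_obs. \<sigma>\<^sup>2) - real n_obs * (\<sigma>\<^sup>2 / real n_obs)"
      using Ym(3) fa_E2 by simp
    also have "\<dots> = (real n_obs - 1) * \<sigma>\<^sup>2" using npos by (simp add: field_simps)
    finally show ?thesis .
  qed
  have good_ui': "good {IdxU d} (\<lambda>x. 1 / \<bar>x (IdxU d)\<bar>)" for d by (rule good_ui)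
  have sh2: "(sh n_obs d x)\<^sup>2 = css n_obs x * (1 / \<bar>x (IdxU d)\<bar>)" for d x
  proof -
    have "(sh n_obs d x)\<^sup>2 = \<bar>css n_obs x / x (IdxU d)\<bar>"
      unfolding sh_def by (metis power2_eq_square real_sqrt_mult real_sqrt_abs)
    then show ?thesis using css_nonneg[of x] by (simp add: abs_div)
  qed
  have sh2_facts: "integrable M (\<lambda>\<omega>. (sh n_obs d (Xw \<omega>))\<^sup>2) \<and>
      expectation (\<lambda>\<omega>. (sh n_obs d (Xw \<omega>))\<^sup>2) = (real n_obs - 1) * \<sigma>\<^sup>2 / (k - 2)" if d: "d < D" for d
  proof -
    have A: "KY \<subseteq> I" "{IdxU d} \<subseteq> I" "KY \<inter> {IdxU d} = {}" using KY_I U_I[OF d] U_KY by auto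
    have gc: "good KY (css n_obs)" unfolding KY_def by (rule good_css)
    have ui: "integrable M (\<lambda>\<omega>. 1 / \<bar>X (IdxU d) \<omega>\<bar>)" using Uinv[OF d] by simp
    note r = indep2[OF ind A good_meas[OF gc] good_local[OF gc] good_meas[OF good_ui'] good_local[OF good_ui'],
       OF css_int[unfolded Xw_def] ui]
    have e: "(\<lambda>\<omega>. (sh n_obs d (Xw \<omega>))\<^sup>2) = (\<lambda>\<omega>. css n_obs (\<lambda>i. X i \<omega>) * (1 / \<bar>X (IdxU d) \<omega>\<bar>))"
      unfolding sh2 Xw_def by simp
    show ?thesis unfolding e using r Uinv[OF d] css_E[unfolded Xw_def] by simp
  qed
  have sh_sqi: "sqi (\<lambda>\<omega>. sh n_obs d (Xw \<omega>))" if d: "d < D" for d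
  proof -
    have "(\<lambda>\<omega>. sh n_obs d (Xw \<omega>)) \<in> borel_measurable M"
      unfolding Xw_def by (rule good_rv[OF good_sh _ rv]) (use KY_I U_I[OF d] in \<open>auto simp: KY_def\<close>)
    then show ?thesis using sh2_facts[OF d] by (simp add: sqi_def)
  qed

  define c where "c j = (case j of IdxZPD _ \<Rightarrow> real n_mis / real N | _ \<Rightarrow> 1 / real N)" for j
  have KWfin: "finite (KW d)" for d by (simp add: KW_def)
  have ww_sum: "ww n_obs n_mis d (Xw \<omega>) = (\<Sum>j\<in>KW d. c j * (X j \<omega> - 0))" for d \<omega>
  proof -
    have "(\<Sum>j\<in>KW d. c j * (X j \<omega> - 0)) = c (IdxZPD d) * ZPD d \<omega> + (\<Sum>j\<in>(\<lambda>i. IdxZimp i d) ` {..<n_mis}. c j * X j \<omega>)"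
      unfolding KW_def by (subst sum.insert) auto
    also have "(\<Sum>j\<in>(\<lambda>i. IdxZimp i d) ` {..<n_mis}. c j * X j \<omega>) = (\<Sum>i<n_mis. (1 / real N) * Zimp i d \<omega>)"
      by (subst sum.reindex) (auto simp: inj_on_def c_def)
    finally show ?thesis
      by (simp add: ww_def Xw_def c_def N_def sum_divide_distrib add_divide_distrib)
  qed
  have KWfacts: "integrable M (\<lambda>\<omega>. (X j \<omega>)\<^sup>2)" "expectation (X j) = 0"
      "expectation (\<lambda>\<omega>. (X j \<omega> - 0)\<^sup>2) = (if j = IdxZPD d then 1 / real n_obs else 1)"
      "sqi (X j)"
    if "j \<in> KW d" "d < D" for j d
    using that Zpm[OF that(2)] Zim[OF _ that(2)] by (auto simp: KW_def sqi_def)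
  have ww_sqi: "sqi (\<lambda>\<omega>. ww n_obs n_mis d (Xw \<omega>))" if d: "d < D" for d
    unfolding ww_sum by (intro sqi_sum sqi_cmult sqi_diff sqi_const KWfacts(4)[OF _ d])
  have ww_E: "expectation (\<lambda>\<omega>. ww n_obs n_mis d (Xw \<omega>)) = 0" if d: "d < D" for d
  proof -
    have intg: "\<And>j. j \<in> KW d \<Longrightarrow> integrable M (\<lambda>\<omega>. c j * (X j \<omega> - 0))"
      by (intro sqi_integrable sqi_cmult sqi_diff KWfacts(4)[OF _ d] sqi_const)
    show ?thesis unfolding ww_sum
      by (subst Bochner_Integration.integral_sum[OF intg]) (auto simp: KWfacts(2)[OF _ d])
  qed
  have ww_E2: "expectation (\<lambda>\<omega>. (ww n_obs n_mis d (Xw \<omega>))\<^sup>2) = real n_mis / (real n_obs * real N)"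
    if d: "d < D" for d
  proof -
    have "expectation (\<lambda>\<omega>. (ww n_obs n_mis d (Xw \<omega>))\<^sup>2)
       = (\<Sum>j\<in>KW d. (c j)\<^sup>2 * expectation (\<lambda>\<omega>. (X j \<omega> - 0)\<^sup>2))"
      unfolding ww_sum by (rule sum_sq_indep[OF ind KWfin KW_I[OF d] KWfacts(1)[OF _ d] KWfacts(2)[OF _ d]])
    also have "\<dots> = (\<Sum>j\<in>KW d. (c j)\<^sup>2 * (if j = IdxZPD d then 1 / real n_obs else 1))"
      by (intro sum.cong refl) (subst KWfacts(3)[OF _ d], assumption, rule refl)
    also have "\<dots> = (real n_mis / real N)\<^sup>2 * (1 / real n_obs) + (\<Sum>i<n_mis. (1 / real N)\<^sup>2)"
      unfolding KW_def by (subst sum.insert) (auto simp: sum.reindex inj_on_def c_def)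
    also have "\<dots> = real n_mis * (real n_mis + real n_obs) / (real n_obs * real N * real N)"
      using npos Npos by (simp add: field_simps power2_eq_square)
    also have "real n_mis + real n_obs = real N" by (simp add: N_def)
    also have "real n_mis * real N / (real n_obs * real N * real N) = real n_mis / (real n_obs * real N)"
      using npos Npos by (simp add: field_simps)
    finally show ?thesis .
  qed

  define t where "t d \<omega> = sh n_obs d (Xw \<omega>) * ww n_obs n_mis d (Xw \<omega>)" for d \<omega>
  have gsh: "good (insert (IdxU d) KY) (sh n_obs d)" for d unfolding KY_def by (rule good_sh)
  have gww: "good (KW d) (ww n_obs n_mis d)" for d unfolding KW_def by (rule good_ww)
  have gfa: "good (insert (IdxU d) KY) fa" for d by (rule good_mono[OF good_fa]) auto
  have AB: "insert (IdxU d) KY \<subseteq> I" "KW d \<subseteq> I" "insert (IdxU d) KY \<inter> KW d = {}" if "d < D" for d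
    using KY_I KW_I[OF that] U_I[OF that] KY_KW[of d] U_KW[of d d] by auto
  have t_sqi: "sqi (t d)" if d: "d < D" for d
  proof -
    have g1: "good (insert (IdxU d) KY) (\<lambda>x. sh n_obs d x * sh n_obs d x)" by (intro good_mult gsh)
    have g2: "good (KW d) (\<lambda>x. ww n_obs n_mis d x * ww n_obs n_mis d x)" by (intro good_mult gww)
    have i1: "integrable M (\<lambda>\<omega>. sh n_obs d (\<lambda>i. X i \<omega>) * sh n_obs d (\<lambda>i. X i \<omega>))"
      using sh2_facts[OF d] by (simp add: Xw_def power2_eq_square)
    have i2: "integrable M (\<lambda>\<omega>. ww n_obs n_mis d (\<lambda>i. X i \<omega>) * ww n_obs n_mis d (\<lambda>i. X i \<omega>))"
      using ww_sqi[OF d] by (simp add: Xw_def sqi_def power2_eq_square)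
    note r = indep2[OF ind AB[OF d] good_meas[OF g1] good_local[OF g1] good_meas[OF g2] good_local[OF g2] i1 i2]
    have "integrable M (\<lambda>\<omega>. (t d \<omega>)\<^sup>2)"
      using r(1) by (simp add: t_def Xw_def power2_eq_square mult_ac)
    moreover have "t d \<in> borel_measurable M"
      using sh_sqi[OF d] ww_sqi[OF d] unfolding t_def[abs_def] sqi_def by (intro borel_measurable_times) auto
    ultimately show ?thesis by (simp add: sqi_def)
  qed
  have t_E: "expectation (t d) = 0" if d: "d < D" for d
  proof -
    note r = indep2[OF ind AB[OF d] good_meas[OF gsh] good_local[OF gsh] good_meas[OF gww] good_local[OF gww]
      sqi_integrable[OF sh_sqi[OF d], unfolded Xw_def] sqi_integrable[OF ww_sqi[OF d], unfolded Xw_def]]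
    show ?thesis using r(2) ww_E[OF d] by (simp add: t_def[abs_def] Xw_def)
  qed
  have t_E2: "expectation (\<lambda>\<omega>. t d \<omega> * t d \<omega>) = (real n_obs - 1) * \<sigma>\<^sup>2 / (k - 2) * (real n_mis / (real n_obs * real N))"
    if d: "d < D" for d
  proof -
    have g1: "good (insert (IdxU d) KY) (\<lambda>x. sh n_obs d x * sh n_obs d x)" by (intro good_mult gsh)
    have g2: "good (KW d) (\<lambda>x. ww n_obs n_mis d x * ww n_obs n_mis d x)" by (intro good_mult gww)
    have i1: "integrable M (\<lambda>\<omega>. sh n_obs d (\<lambda>i. X i \<omega>) * sh n_obs d (\<lambda>i. X i \<omega>))"
      using sh2_facts[OF d] by (simp add: Xw_def power2_eq_square)
    have i2: "integrable M (\<lambda>\<omega>. ww n_obs n_mis d (\<lambda>i. X i \<omega>) * ww n_obs n_mis d (\<lambda>i. X i \<omega>))"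
      using ww_sqi[OF d] by (simp add: Xw_def sqi_def power2_eq_square)
    note r = indep2[OF ind AB[OF d] good_meas[OF g1] good_local[OF g1] good_meas[OF g2] good_local[OF g2] i1 i2]
    have e: "(\<lambda>\<omega>. t d \<omega> * t d \<omega>) = (\<lambda>\<omega>. (sh n_obs d (\<lambda>i. X i \<omega>) * sh n_obs d (\<lambda>i. X i \<omega>)) *
       (ww n_obs n_mis d (\<lambda>i. X i \<omega>) * ww n_obs n_mis d (\<lambda>i. X i \<omega>)))"
      by (simp add: t_def Xw_def mult_ac)
    show ?thesis unfolding e r(2) using sh2_facts[OF d] ww_E2[OF d] by (simp add: Xw_def power2_eq_square)
  qed
  have at_E: "expectation (\<lambda>\<omega>. fa (Xw \<omega>) * t d \<omega>) = 0" if d: "d < D" for d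
  proof -
    have g1: "good (insert (IdxU d) KY) (\<lambda>x. fa x * sh n_obs d x)" by (intro good_mult gsh gfa)
    have i1: "integrable M (\<lambda>\<omega>. fa (\<lambda>i. X i \<omega>) * sh n_obs d (\<lambda>i. X i \<omega>))"
      using sqi_mult[OF fa_sqi sh_sqi[OF d]] by (simp add: Xw_def)
    note r = indep2[OF ind AB[OF d] good_meas[OF g1] good_local[OF g1] good_meas[OF gww] good_local[OF gww]
      i1 sqi_integrable[OF ww_sqi[OF d], unfolded Xw_def]]
    have e: "(\<lambda>\<omega>. fa (Xw \<omega>) * t d \<omega>) = (\<lambda>\<omega>. (fa (\<lambda>i. X i \<omega>) * sh n_obs d (\<lambda>i. X i \<omega>)) * ww n_obs n_mis d (\<lambda>i. X i \<omega>))"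
      by (simp add: t_def Xw_def mult_ac)
    show ?thesis unfolding e r(2) using ww_E[OF d] by (simp add: Xw_def)
  qed
  have tt_E: "expectation (\<lambda>\<omega>. t d \<omega> * t d' \<omega>) = 0" if d: "d < D" "d' < D" "d \<noteq> d'" for d d'
  proof -
    let ?A = "insert (IdxU d) (insert (IdxU d') KY)"
    have g1: "good ?A (\<lambda>x. sh n_obs d x * sh n_obs d' x)"
      by (intro good_mult good_mono[OF gsh]) auto
    have i1: "integrable M (\<lambda>\<omega>. sh n_obs d (\<lambda>i. X i \<omega>) * sh n_obs d' (\<lambda>i. X i \<omega>))"
      using sqi_mult[OF sh_sqi[OF d(1)] sh_sqi[OF d(2)]] by (simp add: Xw_def)
    have ABC: "?A \<subseteq> I" "KW d \<subseteq> I" "KW d' \<subseteq> I" "?A \<inter> KW d = {}" "?A \<inter> KW d' = {}" "KW d \<inter> KW d' = {}"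
      using KY_I KW_I[OF d(1)] KW_I[OF d(2)] U_I[OF d(1)] U_I[OF d(2)] KY_KW[of d] KY_KW[of d']
        U_KW KW_KW[OF d(3)] by auto
    note r = indep3[OF ind ABC good_meas[OF g1] good_local[OF g1] good_meas[OF gww] good_local[OF gww]
       good_meas[OF gww] good_local[OF gww] i1 sqi_integrable[OF ww_sqi[OF d(1)], unfolded Xw_def]
       sqi_integrable[OF ww_sqi[OF d(2)], unfolded Xw_def]]
    have e: "(\<lambda>\<omega>. t d \<omega> * t d' \<omega>) = (\<lambda>\<omega>. (sh n_obs d (\<lambda>i. X i \<omega>) * sh n_obs d' (\<lambda>i. X i \<omega>)) *
       (ww n_obs n_mis d (\<lambda>i. X i \<omega>) * ww n_obs n_mis d' (\<lambda>i. X i \<omega>)))"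
      by (simp add: t_def Xw_def mult_ac)
    show ?thesis unfolding e r using ww_E[OF d(1)] by (simp add: Xw_def)
  qed

  define mu where "mu = mu_MI_PD n_obs n_mis D Y U ZPD Zimp"
  have decomp: "mu \<omega> = \<mu> + fa (Xw \<omega>) + (\<Sum>d<D. t d \<omega>) / real D" for \<omega>
  proof -
    define y where "y = yb n_obs (Xw \<omega>)"
    have ybar: "ybar_obs n_obs Y \<omega> = y" by (simp add: y_def ybar_obs_def yb_def Xw_def)
    have cs: "CSS n_obs Y \<omega> = css n_obs (Xw \<omega>)" by (simp add: CSS_def css_def ybar Xw_def y_def)
    have sg: "sigma_hat n_obs Y U d \<omega> = sh n_obs d (Xw \<omega>)" for d by (simp add: sigma_hat_def sh_def cs Xw_def)
    have sY: "(\<Sum>i<n_obs. Y i \<omega>) = real n_obs * y" using npos by (simp add: y_def yb_def Xw_def)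
    have si: "mu_SI n_obs n_mis Y U ZPD Zimp d \<omega> = y + t d \<omega>" for d
    proof -
      define s where "s = sh n_obs d (Xw \<omega>)"
      have "(\<Sum>i<n_mis. Y_imp n_obs Y U ZPD Zimp i d \<omega>) = (\<Sum>i<n_mis. (y + s * ZPD d \<omega>) + s * Zimp i d \<omega>)"
        by (simp add: Y_imp_def mu_hat_def ybar sg s_def)
      also have "\<dots> = real n_mis * (y + s * ZPD d \<omega>) + s * (\<Sum>i<n_mis. Zimp i d \<omega>)"
        by (simp add: sum.distrib sum_distrib_left)
      finally have e: "(\<Sum>i<n_mis. Y_imp n_obs Y U ZPD Zimp i d \<omega>) = \<dots>" .
      have "mu_SI n_obs n_mis Y U ZPD Zimp d \<omega>
          = (real n_obs * y + (real n_mis * (y + s * ZPD d \<omega>) + s * (\<Sum>i<n_mis. Zimp i d \<omega>))) / real N"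
        unfolding mu_SI_def e sY by (simp add: N_def)
      also have "\<dots> = y + s * ((real n_mis * ZPD d \<omega> + (\<Sum>i<n_mis. Zimp i d \<omega>)) / real N)"
        using Npos by (simp add: N_def field_simps)
      also have "\<dots> = y + t d \<omega>" by (simp add: t_def s_def ww_def Xw_def N_def)
      finally show ?thesis .
    qed
    have "mu \<omega> = (\<Sum>d<D. y + t d \<omega>) / real D" by (simp add: mu_def mu_MI_PD_def si)
    also have "\<dots> = y + (\<Sum>d<D. t d \<omega>) / real D" using Dpos by (simp add: sum.distrib field_simps)
    finally show ?thesis by (simp add: y_def fa_def)
  qed
  define T where "T \<omega> = (\<Sum>d<D. t d \<omega>) / real D" for \<omega>
  have T_sqi: "sqi T" unfolding T_def by (intro sqi_div sqi_sum t_sqi) auto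
  have mu_eq: "mu = (\<lambda>\<omega>. \<mu> + fa (Xw \<omega>) + T \<omega>)" using decomp by (auto simp: T_def)
  have mu_sqi: "sqi mu" unfolding mu_eq by (intro sqi_add sqi_const fa_sqi T_sqi)
  have T_int: "integrable M T" by (rule sqi_integrable[OF T_sqi])
  have t_int: "\<And>d. d < D \<Longrightarrow> integrable M (t d)" using t_sqi sqi_integrable by blast
  have T_E: "expectation T = 0"
  proof -
    have "expectation (\<lambda>\<omega>. \<Sum>d<D. t d \<omega>) = 0"
      using t_int t_E by (subst Bochner_Integration.integral_sum) auto
    then show ?thesis unfolding T_def by simp
  qed
  have mu_E: "expectation mu = \<mu>"
    unfolding mu_eq using T_int sqi_integrable[OF fa_sqi] fa_E T_E by (simp add: prob_space)
  have var1: "variance mu = expectation (\<lambda>\<omega>. (fa (Xw \<omega>))\<^sup>2 + 2 * (\<Sum>d<D. fa (Xw \<omega>) * t d \<omega>) / real D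
      + (\<Sum>d<D. \<Sum>d'<D. t d \<omega> * t d' \<omega>) / (real D)\<^sup>2)"
  proof -
    have "(mu \<omega> - expectation mu)\<^sup>2 = (fa (Xw \<omega>))\<^sup>2 + 2 * (\<Sum>d<D. fa (Xw \<omega>) * t d \<omega>) / real D
      + (\<Sum>d<D. \<Sum>d'<D. t d \<omega> * t d' \<omega>) / (real D)\<^sup>2" for \<omega>
      unfolding mu_E decomp using Dpos
      by (simp add: power2_eq_square sum_distrib_left[symmetric] sum_product field_simps)
    then show ?thesis by simp
  qed
  have i_at: "\<And>d. d < D \<Longrightarrow> integrable M (\<lambda>\<omega>. fa (Xw \<omega>) * t d \<omega>)"
    using sqi_mult[OF fa_sqi t_sqi] by blast
  have i_tt: "\<And>d d'. d < D \<Longrightarrow> d' < D \<Longrightarrow> integrable M (\<lambda>\<omega>. t d \<omega> * t d' \<omega>)"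
    using sqi_mult[OF t_sqi t_sqi] by blast
  have E_at: "expectation (\<lambda>\<omega>. (\<Sum>d<D. fa (Xw \<omega>) * t d \<omega>)) = 0"
    using i_at at_E by (subst Bochner_Integration.integral_sum) auto
  have E_tt: "expectation (\<lambda>\<omega>. (\<Sum>d<D. \<Sum>d'<D. t d \<omega> * t d' \<omega>))
       = real D * ((real n_obs - 1) * \<sigma>\<^sup>2 / (k - 2) * (real n_mis / (real n_obs * real N)))"
  proof -
    have "expectation (\<lambda>\<omega>. (\<Sum>d<D. \<Sum>d'<D. t d \<omega> * t d' \<omega>))
        = (\<Sum>d<D. \<Sum>d'<D. expectation (\<lambda>\<omega>. t d \<omega> * t d' \<omega>))"
    proof -
      have ii: "\<And>d. d \<in> {..<D} \<Longrightarrow> integrable M (\<lambda>\<omega>. \<Sum>d'<D. t d \<omega> * t d' \<omega>)"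
        using i_tt by (intro Bochner_Integration.integrable_sum) auto
      have "expectation (\<lambda>\<omega>. (\<Sum>d<D. \<Sum>d'<D. t d \<omega> * t d' \<omega>))
          = (\<Sum>d<D. expectation (\<lambda>\<omega>. \<Sum>d'<D. t d \<omega> * t d' \<omega>))"
        by (rule Bochner_Integration.integral_sum[OF ii])
      also have "\<dots> = (\<Sum>d<D. \<Sum>d'<D. expectation (\<lambda>\<omega>. t d \<omega> * t d' \<omega>))"
      proof (intro sum.cong refl)
        fix d assume "d \<in> {..<D}"
        then show "expectation (\<lambda>\<omega>. \<Sum>d'<D. t d \<omega> * t d' \<omega>) = (\<Sum>d'<D. expectation (\<lambda>\<omega>. t d \<omega> * t d' \<omega>))"
          using i_tt by (intro Bochner_Integration.integral_sum) auto
      qed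
      finally show ?thesis .
    qed
    also have "\<dots> = (\<Sum>d<D. (real n_obs - 1) * \<sigma>\<^sup>2 / (k - 2) * (real n_mis / (real n_obs * real N)))"
    proof (intro sum.cong refl)
      fix d assume d: "d \<in> {..<D}"
      have "(\<Sum>d'<D. expectation (\<lambda>\<omega>. t d \<omega> * t d' \<omega>))
          = (\<Sum>d'<D. if d' = d then (real n_obs - 1) * \<sigma>\<^sup>2 / (k - 2) * (real n_mis / (real n_obs * real N)) else 0)"
        using d t_E2 tt_E by (intro sum.cong refl) auto
      also have "\<dots> = (real n_obs - 1) * \<sigma>\<^sup>2 / (k - 2) * (real n_mis / (real n_obs * real N))"
        using d by (simp add: sum.delta)
      finally show "(\<Sum>d'<D. expectation (\<lambda>\<omega>. t d \<omega> * t d' \<omega>)) = \<dots>" .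
    qed
    also have "\<dots> = real D * ((real n_obs - 1) * \<sigma>\<^sup>2 / (k - 2) * (real n_mis / (real n_obs * real N)))"
      by simp
    finally show ?thesis .
  qed
  have var2: "variance mu = \<sigma>\<^sup>2 / real n_obs
      + (real D * ((real n_obs - 1) * \<sigma>\<^sup>2 / (k - 2) * (real n_mis / (real n_obs * real N)))) / (real D)\<^sup>2"
  proof -
    have ia: "integrable M (\<lambda>\<omega>. 2 * (\<Sum>d<D. fa (Xw \<omega>) * t d \<omega>) / real D)"
      using i_at by (intro integrable_divide integrable_mult_right Bochner_Integration.integrable_sum) auto
    have it: "integrable M (\<lambda>\<omega>. (\<Sum>d<D. \<Sum>d'<D. t d \<omega> * t d' \<omega>) / (real D)\<^sup>2)"
      using i_tt by (intro integrable_divide Bochner_Integration.integrable_sum) auto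
    show ?thesis unfolding var1
      using fa2_int ia it E_at E_tt fa_E2 by (simp add: Bochner_Integration.integral_add)
  qed
  have final: "variance mu = \<sigma>\<^sup>2 / real n_obs *
        (1 + real n_mis * (real n_obs - 1) /
             (real D * real (n_obs + n_mis) * (real n_obs + \<nu>_prior - 3)))"
  proof -
    have kk: "k - 2 = real n_obs + \<nu>_prior - 3" by (simp add: k_def)
    have kp: "real n_obs + \<nu>_prior - 3 > 0" using assms(6) by simp
    define q where "q = real n_obs + \<nu>_prior - 3"
    have qp: "q > 0" using kp by (simp add: q_def)
    have rN: "real (n_obs + n_mis) = real N" by (simp add: N_def)
    have "real D * ((real n_obs - 1) * \<sigma>\<^sup>2 / q * (real n_mis / (real n_obs * real N))) / (real D)\<^sup>2
        = \<sigma>\<^sup>2 / real n_obs * (real n_mis * (real n_obs - 1) / (real D * real N * q))"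
      using npos Npos Dpos qp by (simp add: field_simps power2_eq_square)
    then show ?thesis unfolding var2 kk rN q_def[symmetric] by (simp add: distrib_left)
  qed
  show ?thesis
    using mu_sqi mu_E final sqi_integrable[OF mu_sqi] by (simp add: mu_def sqi_def)
qed

end
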